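(* Let $L_1',L_2'\subseteq\mathcal{P}$ be simple event logs, $bk\in\mathcal{A}^*$, $n\in\mathbb{N}_{\ge1}$, $M_1=ms^{L_1',n}(bk)$ and $M_2=ms^{L_2',n}(bk)$. Let $CG(M_1,M_2)$ be the set of pairs $(g_1',g_2')$ where $g_1'$ is a group of $M_1$, $g_2'$ is a group of $M_2$, and $g_1'\overset{n}{\sim}g_2'$, and set $C(M_1,M_2)=\sum_{(g_1',g_2')\in CG(M_1,M_2)}\big(|g_2'|-\min(|g_1'|,|g_2'|)\big)$. Then for every linker $f$ (w.r.t. $n$) from $L_1'$ to $L_2'$, at least $C(M_1,M_2)$ elements of $M_2$ are not of the form $f(p_1')$ with $p_1'\in M_1$; more precisely, for each $(g_1',g_2')\in CG(M_1,M_2)$, at least $|g_2'|-\min(|g_1'|,|g_2'|)$ elements of $g_2'$ are not images under $f$ of elements of $M_1$.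
   Context: $\mathcal{P}=\mathcal{C}\times\mathcal{A}^*\times\mathcal{S}$ is the set of simple process instances $p=(c,\sigma,s)$ (case id, sequence of activities, sensitive value) with projections $\pi_c,\pi_\sigma,\pi_s$; a simple event log is a finite $L\subseteq\mathcal{P}$ in which elements with equal case ids are equal. $\sqsubseteq$ is the (not necessarily contiguous) subsequence relation; $pref(\langle a_1,\dots,a_m\rangle)=\{\langle a_1,\dots,a_k\rangle\mid 1\le k\le m\}$; $LCS(\sigma_1,\sigma_2)$ is the set of longest common subsequences, $LCS^{\sigma_1}_{\sigma_2}$ their length, and $SCS^{\sigma_1}_{\sigma_2}$ the length of a shortest common super-sequence. Specialization: $p'\preceq_n p$ iff $\pi_\sigma(p')\sqsubseteq\pi_\sigma(p)$, $|\pi_\sigma(p)|\le|\pi_\sigma(p')|+n$, and $\pi_s(p)=\pi_s(p')$. Matching set: $ms^{L',n}(bk)=\{p'\in L'\mid \exists p\in\mathcal{P}: p'\preceq_n p \wedge bk\sqsubseteq\pi_\sigma(p)\}$. A group of a matching set $M$ is a nonempty set of the form $\{p\in M\mid \pi_s(p)=v\}$ for some $v\in\mathcal{S}$. Linker: a total injective function $f:L_1'\to L_2'$ such that for every $p_1'\in L_1'$ there exist $p_1,p_2\in\mathcal{P}$ with $p_1'\preceq_n p_1$, $f(p_1')\preceq_n p_2$, $\pi_s(p_1)=\pi_s(p_2)$, and $\pi_\sigma(p_1)\in pref(\pi_\sigma(p_2))$. Comparable sequences: $\sigma_1\overset{n}{\sim}\sigma_2$ iff $n\ge|\sigma_1|-LCS^{\sigma_1}_{\sigma_2}$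 in case some $\sigma\in LCS(\sigma_1,\sigma_2)$ lies in $pref(\sigma_2)$, and $n\ge SCS^{\sigma_1}_{\sigma_2}-\min(|\sigma_1|,|\sigma_2|)$ otherwise. Comparable process instances: $p_1\overset{n}{\sim}p_2$ iff $\pi_s(p_1)=\pi_s(p_2)$ and $\pi_\sigma(p_1)\overset{n}{\sim}\pi_\sigma(p_2)$. Comparable groups: $g_1'\overset{n}{\sim}g_2'$ iff $p_1'\overset{n}{\sim}p_2'$ for all $p_1'\in g_1'$, $p_2'\in g_2'$. *)

theory Defs
  imports Main "HOL-Library.Sublist"
begin

text \<open>Simple process instances: (case id, activity sequence, sensitive value).\<close>
type_synonym ('c,'a,'s) pinst = "'c \<times> 'a list \<times> 's"

definition pi_c :: "('c,'a,'s) pinst \<Rightarrow> 'c" where "pi_c p = fst p"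
definition pi_sigma :: "('c,'a,'s) pinst \<Rightarrow> 'a list" where "pi_sigma p = fst (snd p)"
definition pi_s :: "('c,'a,'s) pinst \<Rightarrow> 's" where "pi_s p = snd (snd p)"

definition simple_event_log :: "('c,'a,'s) pinst set \<Rightarrow> bool" where
  "simple_event_log L \<longleftrightarrow> finite L \<and> (\<forall>p\<in>L. \<forall>q\<in>L. pi_c p = pi_c q \<longrightarrow> p = q)"

definition pref :: "'a list \<Rightarrow> 'a list set" where
  "pref xs = {take k xs | k. 1 \<le> k \<and> k \<le> length xs}"

definition LCS :: "'a list \<Rightarrow> 'a list \<Rightarrow> 'a list set" where
  "LCS s1 s2 = {s. subseq s s1 \<and> subseq s s2 \<and>
      (\<forall>t. subseq t s1 \<and> subseq t s2 \<longrightarrow> length t \<le> length s)}"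

definition LCS_len :: "'a list \<Rightarrow> 'a list \<Rightarrow> nat" where
  "LCS_len s1 s2 = Max {length s | s. subseq s s1 \<and> subseq s s2}"

definition SCS_len :: "'a list \<Rightarrow> 'a list \<Rightarrow> nat" where
  "SCS_len s1 s2 = (LEAST k. \<exists>s. subseq s1 s \<and> subseq s2 s \<and> length s = k)"

definition specializes :: "nat \<Rightarrow> ('c,'a,'s) pinst \<Rightarrow> ('c,'a,'s) pinst \<Rightarrow> bool" where
  "specializes n p' p \<longleftrightarrow> subseq (pi_sigma p') (pi_sigma p) \<and>
      length (pi_sigma p) \<le> length (pi_sigma p') + n \<and> pi_s p = pi_s p'"

definition matching_set :: "('c,'a,'s) pinst set \<Rightarrow> nat \<Rightarrow> 'a list \<Rightarrow> ('c,'a,'s) pinst set" where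
  "matching_set L' n bk = {p' \<in> L'. \<exists>p. specializes n p' p \<and> subseq bk (pi_sigma p)}"

definition is_group :: "('c,'a,'s) pinst set \<Rightarrow> ('c,'a,'s) pinst set \<Rightarrow> bool" where
  "is_group M g \<longleftrightarrow> g \<noteq> {} \<and> (\<exists>v. g = {p \<in> M. pi_s p = v})"

definition linker :: "nat \<Rightarrow> ('c,'a,'s) pinst set \<Rightarrow> ('c,'a,'s) pinst set
    \<Rightarrow> (('c,'a,'s) pinst \<Rightarrow> ('c,'a,'s) pinst) \<Rightarrow> bool" where
  "linker n L1 L2 f \<longleftrightarrow> f ` L1 \<subseteq> L2 \<and> inj_on f L1 \<and>
     (\<forall>p1'\<in>L1. \<exists>p1 p2. specializes n p1' p1 \<and> specializes n (f p1') p2 \<and>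
        pi_s p1 = pi_s p2 \<and> pi_sigma p1 \<in> pref (pi_sigma p2))"

definition comparable_seq :: "nat \<Rightarrow> 'a list \<Rightarrow> 'a list \<Rightarrow> bool" where
  "comparable_seq n s1 s2 \<longleftrightarrow>
     (if \<exists>s\<in>LCS s1 s2. s \<in> pref s2
      then n \<ge> length s1 - LCS_len s1 s2
      else n \<ge> SCS_len s1 s2 - min (length s1) (length s2))"

definition comparable_pi :: "nat \<Rightarrow> ('c,'a,'s) pinst \<Rightarrow> ('c,'a,'s) pinst \<Rightarrow> bool" where
  "comparable_pi n p1 p2 \<longleftrightarrow> pi_s p1 = pi_s p2 \<and> comparable_seq n (pi_sigma p1) (pi_sigma p2)"

definition comparable_groups :: "nat \<Rightarrow> ('c,'a,'s) pinst set \<Rightarrow> ('c,'a,'s) pinst set \<Rightarrow> bool" where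
  "comparable_groups n g1 g2 \<longleftrightarrow> (\<forall>p1\<in>g1. \<forall>p2\<in>g2. comparable_pi n p1 p2)"

definition CG :: "nat \<Rightarrow> ('c,'a,'s) pinst set \<Rightarrow> ('c,'a,'s) pinst set
    \<Rightarrow> (('c,'a,'s) pinst set \<times> ('c,'a,'s) pinst set) set" where
  "CG n M1 M2 = {(g1, g2). is_group M1 g1 \<and> is_group M2 g2 \<and> comparable_groups n g1 g2}"

definition Cval :: "nat \<Rightarrow> ('c,'a,'s) pinst set \<Rightarrow> ('c,'a,'s) pinst set \<Rightarrow> nat" where
  "Cval n M1 M2 = (\<Sum>(g1, g2)\<in>CG n M1 M2. card g2 - min (card g1) (card g2))"

end

theory Submission
  imports Defs
begin

theorem theorem4:
  fixes L1 L2 :: "('c,'a,'s) pinst set" and bk :: "'a list" and n :: nat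
    and f :: "('c,'a,'s) pinst \<Rightarrow> ('c,'a,'s) pinst"
  assumes "simple_event_log L1" and "simple_event_log L2" and "n \<ge> 1"
    and "linker n L1 L2 f"
  shows "card (matching_set L2 n bk - f ` matching_set L1 n bk)
           \<ge> Cval n (matching_set L1 n bk) (matching_set L2 n bk)
       \<and> (\<forall>(g1, g2)\<in>CG n (matching_set L1 n bk) (matching_set L2 n bk).
            card (g2 - f ` matching_set L1 n bk) \<ge> card g2 - min (card g1) (card g2))"
proof -
  define M1 where "M1 = matching_set L1 n bk"
  define M2 where "M2 = matching_set L2 n bk"
  define F where "F = f ` M1"
  have M1L: "M1 \<subseteq> L1" and M2L: "M2 \<subseteq> L2" unfolding M1_def M2_def matching_set_def by auto
  have fin1: "finite M1" and fin2: "finite M2"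
    using assms(1,2) M1L M2L finite_subset unfolding simple_event_log_def by blast+
  have pres: "\<And>p. p \<in> L1 \<Longrightarrow> pi_s (f p) = pi_s p"
  proof -
    fix p assume "p \<in> L1"
    then obtain p1 p2 where "specializes n p p1" "specializes n (f p) p2" "pi_s p1 = pi_s p2"
      using assms(4) unfolding linker_def by blast
    thus "pi_s (f p) = pi_s p" unfolding specializes_def by simp
  qed
  have inj: "inj_on f M1" using assms(4) M1L unfolding linker_def by (meson inj_on_subset)
  have key: "\<And>g1 g2. (g1, g2) \<in> CG n M1 M2 \<Longrightarrow> {p \<in> M1. f p \<in> g2} \<subseteq> g1"
  proof -
    fix g1 g2 assume "(g1, g2) \<in> CG n M1 M2"
    hence G1: "is_group M1 g1" and G2: "is_group M2 g2" and C: "comparable_groups n g1 g2"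
      unfolding CG_def by auto
    obtain v1 where v1: "g1 = {p \<in> M1. pi_s p = v1}" "g1 \<noteq> {}" using G1 unfolding is_group_def by blast
    obtain v2 where v2: "g2 = {p \<in> M2. pi_s p = v2}" "g2 \<noteq> {}" using G2 unfolding is_group_def by blast
    obtain q1 where q1: "q1 \<in> g1" using v1 by blast
    obtain q2 where q2: "q2 \<in> g2" using v2 by blast
    have "pi_s q1 = pi_s q2" using C q1 q2 unfolding comparable_groups_def comparable_pi_def by blast
    hence "v1 = v2" using q1 q2 v1 v2 by simp
    thus "{p \<in> M1. f p \<in> g2} \<subseteq> g1" using v1 v2 pres M1L by auto
  qed
  have grp: "\<And>g1 g2. (g1, g2) \<in> CG n M1 M2 \<Longrightarrow> card g2 - min (card g1) (card g2) \<le> card (g2 - F)"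
  proof -
    fix g1 g2 assume cg: "(g1, g2) \<in> CG n M1 M2"
    have g2M: "g2 \<subseteq> M2" using cg unfolding CG_def is_group_def by auto
    have g1M: "g1 \<subseteq> M1" using cg unfolding CG_def is_group_def by auto
    have fg2: "finite g2" using g2M fin2 finite_subset by blast
    have fg1: "finite g1" using g1M fin1 finite_subset by blast
    have "g2 \<inter> F \<subseteq> f ` {p \<in> M1. f p \<in> g2}" unfolding F_def by auto
    also have "\<dots> \<subseteq> f ` g1" using key[OF cg] by blast
    finally have "card (g2 \<inter> F) \<le> card (f ` g1)" using fg1 by (simp add: card_mono)
    also have "\<dots> \<le> card g1" by (rule card_image_le[OF fg1])
    finally have a: "card (g2 \<inter> F) \<le> card g1" .
    have b: "card (g2 \<inter> F) \<le> card g2" using fg2 by (simp add: card_mono)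
    have "card (g2 - F) = card g2 - card (g2 \<inter> F)"
      using fg2 by (simp add: card_Diff_subset_Int)
    thus "card g2 - min (card g1) (card g2) \<le> card (g2 - F)" using a b by linarith
  qed
  have finCG: "finite (CG n M1 M2)"
  proof (rule finite_subset)
    show "CG n M1 M2 \<subseteq> Pow M1 \<times> Pow M2" unfolding CG_def is_group_def by auto
    show "finite (Pow M1 \<times> Pow M2)" using fin1 fin2 by simp
  qed
  have injsnd: "inj_on snd (CG n M1 M2)"
  proof (rule inj_onI)
    fix x y assume x: "x \<in> CG n M1 M2" and y: "y \<in> CG n M1 M2" and e: "snd x = snd y"
    obtain a b where xa: "x = (a, b)" by fastforce
    obtain c d where yc: "y = (c, d)" by fastforce
    have bd: "b = d" using e xa yc by simp
    have Ga: "is_group M1 a" "is_group M1 c" "is_group M2 b" "comparable_groups n a b" "comparable_groups n c b"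
      using x y xa yc bd unfolding CG_def by auto
    obtain va where va: "a = {p \<in> M1. pi_s p = va}" "a \<noteq> {}" using Ga(1) unfolding is_group_def by blast
    obtain vc where vc: "c = {p \<in> M1. pi_s p = vc}" "c \<noteq> {}" using Ga(2) unfolding is_group_def by blast
    obtain pb where pb: "pb \<in> b" using Ga(3) unfolding is_group_def by blast
    obtain qa where qa: "qa \<in> a" using va by blast
    obtain qc where qc: "qc \<in> c" using vc by blast
    have "pi_s qa = pi_s pb" using Ga(4) qa pb unfolding comparable_groups_def comparable_pi_def by blast
    hence e1: "va = pi_s pb" using qa va by simp
    have "pi_s qc = pi_s pb" using Ga(5) qc pb unfolding comparable_groups_def comparable_pi_def by blast
    hence "vc = pi_s pb" using qc vc by simp
    with e1 show "x = y" using xa yc bd va vc by simp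
  qed
  have disj: "\<And>b d. b \<in> snd ` CG n M1 M2 \<Longrightarrow> d \<in> snd ` CG n M1 M2 \<Longrightarrow> b \<noteq> d \<Longrightarrow> (b - F) \<inter> (d - F) = {}"
  proof -
    fix b d assume b: "b \<in> snd ` CG n M1 M2" and d: "d \<in> snd ` CG n M1 M2" and ne: "b \<noteq> d"
    have "is_group M2 b" "is_group M2 d" using b d unfolding CG_def by auto
    then obtain vb vd where "b = {p \<in> M2. pi_s p = vb}" "d = {p \<in> M2. pi_s p = vd}"
      unfolding is_group_def by blast
    thus "(b - F) \<inter> (d - F) = {}" using ne by auto
  qed
  have sub: "\<And>b. b \<in> snd ` CG n M1 M2 \<Longrightarrow> b \<subseteq> M2" unfolding CG_def is_group_def by auto
  have "Cval n M1 M2 \<le> (\<Sum>(g1, g2)\<in>CG n M1 M2. card (g2 - F))"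
    unfolding Cval_def by (rule sum_mono) (use grp in auto)
  also have "\<dots> = (\<Sum>x\<in>CG n M1 M2. card (snd x - F))" by (simp add: case_prod_beta)
  also have "\<dots> = (\<Sum>b\<in>snd ` CG n M1 M2. card (b - F))"
    using sum.reindex[OF injsnd, of "\<lambda>b. card (b - F)"] by simp
  also have "\<dots> = card (\<Union>b\<in>snd ` CG n M1 M2. b - F)"
  proof (rule card_UN_disjoint[symmetric])
    show "finite (snd ` CG n M1 M2)" using finCG by simp
    show "\<forall>i\<in>snd ` CG n M1 M2. finite (i - F)" using sub fin2 by (auto intro: finite_subset)
    show "\<forall>i\<in>snd ` CG n M1 M2. \<forall>j\<in>snd ` CG n M1 M2. i \<noteq> j \<longrightarrow> (i - F) \<inter> (j - F) = {}"
      using disj by blast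
  qed
  also have "\<dots> \<le> card (M2 - F)"
    by (rule card_mono) (use fin2 sub in auto)
  finally have A: "Cval n M1 M2 \<le> card (M2 - F)" .
  show ?thesis using A grp unfolding M1_def[symmetric] M2_def[symmetric] F_def by auto
qed

end
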